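(* Let $n\ge2$, $w\in\widetilde{S}_n^\circ$ with $t$-coordinates $(t_1,\dots,t_{n-1})$, and fix $1\le i\le n-1$. Let $j$ be the largest integer $j\ge1$ with $w(i+1)>w(i+jn)$ if such $j$ exists, and $j=0$ otherwise. Then $t_i$ equals the number of window boundaries between positions $i+1$ and $i+jn$, i.e. the number of integers $r$ with $i+1\le rn< i+jn$ (this is $0$ when $j=0$).
   Context: An affine permutation of size $n$ is a bijection $w:\mathbb{Z}\to\mathbb{Z}$ with $w(i+n)=w(i)+n$ for all $i$ and $w(1)+\cdots+w(n)=\binom{n+1}{2}$, base window $[w_1,\dots,w_n]=[w(1),\dots,w(n)]$. $\widetilde{S}_n^\circ$ is the set of such $w$ with $w_1<\cdots<w_n$. For $w\in\widetilde{S}_n^\circ$, an integer is a bead if it equals $w_j-mn$ for some $j$ and integer $m\ge0$, a gap otherwise; the gap vector $\dot g(w)=(g_1,\dots,g_{n-1})$ has $g_i$ = number of gaps strictly between $w_i$ and $w_{i+1}$. $\mathsf{BIAS}_n$ is the set of $w\in\widetilde{S}_n^\circ$ with all $w_{i+1}-w_i\in\{1,\dots,n-1\}$; the bias of $w\in\widetilde{S}_n^\circ$ is the unique $b\in\mathsf{BIAS}_n$ with $b_{i+1}-b_i\equiv w_{i+1}-w_i\pmod n$ for all $i$. The $t$-coordinates of $w$ are the unique $t\in\mathbb{Z}_{\ge0}^{n-1}$ with $\dot g(w)=(t_1,2t_2,\dots,(n-1)t_{n-1})+\dot g(b)$, $b$ the bias of $w$ (this $t$ exists and is unique). Window boundaries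 lie between positions $rn$ and $rn+1$ for $r\in\mathbb{Z}$. *)

theory Defs
  imports Main
begin

definition affine_perm :: "nat \<Rightarrow> (int \<Rightarrow> int) \<Rightarrow> bool" where
  "affine_perm n w \<longleftrightarrow> bij w \<and> (\<forall>i. w (i + int n) = w i + int n)
     \<and> (\<Sum>k = 1..int n. w k) = int ((n + 1) choose 2)"

definition Scirc :: "nat \<Rightarrow> (int \<Rightarrow> int) set" where
  "Scirc n = {w. affine_perm n w \<and> (\<forall>i. 1 \<le> i \<and> i < int n \<longrightarrow> w i < w (i + 1))}"

definition bead :: "nat \<Rightarrow> (int \<Rightarrow> int) \<Rightarrow> int \<Rightarrow> bool" where
  "bead n w x \<longleftrightarrow> (\<exists>j m. 1 \<le> j \<and> j \<le> int n \<and> 0 \<le> m \<and> x = w j - m * int n)"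

definition gapcount :: "nat \<Rightarrow> (int \<Rightarrow> int) \<Rightarrow> int \<Rightarrow> nat" where
  "gapcount n w i = card {x. w i < x \<and> x < w (i + 1) \<and> \<not> bead n w x}"

definition BIAS :: "nat \<Rightarrow> (int \<Rightarrow> int) set" where
  "BIAS n = {w \<in> Scirc n. \<forall>i. 1 \<le> i \<and> i < int n \<longrightarrow>
      w (i + 1) - w i \<in> {1 .. int n - 1}}"

definition bias_of :: "nat \<Rightarrow> (int \<Rightarrow> int) \<Rightarrow> (int \<Rightarrow> int)" where
  "bias_of n w = (THE b. b \<in> BIAS n \<and> (\<forall>i. 1 \<le> i \<and> i < int n \<longrightarrow>
      (b (i + 1) - b i) mod int n = (w (i + 1) - w i) mod int n))"

definition t_coord :: "nat \<Rightarrow> (int \<Rightarrow> int) \<Rightarrow> int \<Rightarrow> nat" where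
  "t_coord n w i = (THE t. int (gapcount n w i) = i * int t + int (gapcount n (bias_of n w) i))"

definition jmax :: "nat \<Rightarrow> (int \<Rightarrow> int) \<Rightarrow> int \<Rightarrow> nat" where
  "jmax n w i = (if \<exists>j::nat. 1 \<le> j \<and> w (i + 1) > w (i + int j * int n)
     then (GREATEST j::nat. 1 \<le> j \<and> w (i + 1) > w (i + int j * int n)) else 0)"

end

theory Submission
  imports Defs
begin

lemma per_int:
  fixes f :: "int \<Rightarrow> int"
  assumes p: "\<forall>x. f (x + int n) = f x + int n"
  shows "f (x + q * int n) = f x + q * int n"
proof -
  have A: "f (y + int m * int n) = f y + int m * int n" for m y
  proof (induction m arbitrary: y)
    case 0 then show ?case by simp
  next
    case (Suc m)
    have "f (y + int (Suc m) * int n) = f ((y + int m * int n) + int n)" by (simp add: algebra_simps)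
    also have "\<dots> = f (y + int m * int n) + int n" using p by blast
    also have "\<dots> = f y + int (Suc m) * int n" using Suc by (simp add: algebra_simps)
    finally show ?case .
  qed
  show ?thesis
  proof (cases "q \<ge> 0")
    case True
    then obtain m where "q = int m" using nonneg_eq_int by blast
    then show ?thesis using A by simp
  next
    case False
    define m where "m = nat (-q)"
    have q: "q = - int m" using False m_def by simp
    have "f (x + q * int n + int m * int n) = f (x + q * int n) + int m * int n" using A by blast
    then show ?thesis using q by (simp add: algebra_simps)
  qed
qed

lemma res_lemma:
  assumes "inj w" "\<forall>x. w (x + int n) = w x + int n"
    "w x mod int n = w y mod int n"
  shows "\<exists>q. y = x + q * int n"
proof -
  define q where "q = (w y - w x) div int n"
  have "int n dvd (w y - w x)" using assms(3) by (metis mod_eq_dvd_iff)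
  then have "w y = w x + q * int n" unfolding q_def by auto
  also have "\<dots> = w (x + q * int n)" using per_int assms(2) by metis
  finally have "y = x + q * int n" using assms(1) by (simp add: inj_eq)
  thus ?thesis by blast
qed

lemma window_mono:
  fixes w :: "int \<Rightarrow> int"
  assumes "\<forall>i. 1 \<le> i \<and> i < int n \<longrightarrow> w i < w (i + 1)"
    "1 \<le> a" "a \<le> b" "b \<le> int n"
  shows "w a \<le> w b"
proof -
  have "a + int k \<le> int n \<longrightarrow> w a \<le> w (a + int k)" for k
  proof (induction k)
    case 0 then show ?case by simp
  next
    case (Suc k)
    show ?case
    proof
      assume h: "a + int (Suc k) \<le> int n"
      have "w (a + int k) < w (a + int k + 1)" using assms(1,2) h by auto
      moreover have "w a \<le> w (a + int k)" using Suc h by simp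
      moreover have e: "a + int (Suc k) = a + int k + 1" by simp
      ultimately show "w a \<le> w (a + int (Suc k))" by (simp only: e)
    qed
  qed
  from this[of "nat (b - a)"] show ?thesis using assms by simp
qed

lemma bij_shift:
  fixes w b :: "int \<Rightarrow> int"
  assumes "bij w" "\<forall>x. w (x + int n) = w x + int n" "\<forall>x. b (x + int n) = b x + int n"
     "\<forall>x. b x mod int n = (w x + c) mod int n" "n > 0"
  shows "bij b"
proof (rule bijI)
  show "inj b"
  proof (rule injI)
    fix x y assume h: "b x = b y"
    have "(w x + c) mod int n = (w y + c) mod int n" using h assms(4) by metis
    then have "int n dvd (w x + c) - (w y + c)" by (metis mod_eq_dvd_iff)
    then have "int n dvd w x - w y" by simp
    then have "w x mod int n = w y mod int n" by (metis mod_eq_dvd_iff)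
    then obtain q where q: "y = x + q * int n" using res_lemma assms(1,2) bij_is_inj by metis
    have "b y = b x + q * int n" using q per_int assms(3) by metis
    then have "q * int n = 0" using h by simp
    then show "x = y" using q assms(5) by simp
  qed
  show "surj b"
  proof -
    { fix y
      obtain z where z: "w z = y - c" using assms(1) by (metis bij_pointE)
      have "b z mod int n = y mod int n" using assms(4) z by simp
      then have "int n dvd (y - b z)" by (metis mod_eq_dvd_iff)
      then have "y = b z + ((y - b z) div int n) * int n" by auto
      also have "\<dots> = b (z + ((y - b z) div int n) * int n)" using per_int assms(3) by metis
      finally have "y \<in> range b" by blast }
    then show ?thesis by blast
  qed
qed


definition Cnt :: "nat \<Rightarrow> int set \<Rightarrow> int \<Rightarrow> nat \<Rightarrow> nat" where
 "Cnt n R a L = card {y. a \<le> y \<and> y < a + int L \<and> y mod int n \<notin> R}"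

lemma Cnt_add: "Cnt n R a (L1 + L2) = Cnt n R a L1 + Cnt n R (a + int L1) L2"
proof -
  let ?A = "{y. a \<le> y \<and> y < a + int L1 \<and> y mod int n \<notin> R}"
  let ?B = "{y. a + int L1 \<le> y \<and> y < a + int L1 + int L2 \<and> y mod int n \<notin> R}"
  have "{y. a \<le> y \<and> y < a + int (L1 + L2) \<and> y mod int n \<notin> R} = ?A \<union> ?B" by auto
  moreover have "finite ?A" by (rule finite_subset[of _ "{a..<a + int L1}"]) auto
  moreover have "finite ?B" by (rule finite_subset[of _ "{a + int L1..<a + int L1 + int L2}"]) auto
  moreover have "?A \<inter> ?B = {}" by auto
  ultimately show ?thesis unfolding Cnt_def by (simp add: card_Un_disjoint)
qed

lemma Cnt_period:
  assumes "n > 0"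
  shows "Cnt n R a n = card ({0..<int n} - R)"
proof -
  let ?A = "{y. a \<le> y \<and> y < a + int n \<and> y mod int n \<notin> R}"
  have inj: "inj_on (\<lambda>y. y mod int n) ?A"
  proof (rule inj_onI)
    fix x y assume x: "x \<in> ?A" and y: "y \<in> ?A" and e: "x mod int n = y mod int n"
    have "x - a = (x - a) mod int n" using x by simp
    also have "\<dots> = (x mod int n - a) mod int n" by (simp add: mod_diff_left_eq)
    also have "\<dots> = (y mod int n - a) mod int n" using e by simp
    also have "\<dots> = (y - a) mod int n" by (simp add: mod_diff_left_eq)
    also have "\<dots> = y - a" using y by simp
    finally show "x = y" by simp
  qed
  have img: "(\<lambda>y. y mod int n) ` ?A = {0..<int n} - R"
  proof
    show "(\<lambda>y. y mod int n) ` ?A \<subseteq> {0..<int n} - R" using assms by auto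
    show "{0..<int n} - R \<subseteq> (\<lambda>y. y mod int n) ` ?A"
    proof
      fix z assume z: "z \<in> {0..<int n} - R"
      define y where "y = a + (z - a) mod int n"
      have "y mod int n = (a + (z - a)) mod int n" unfolding y_def by (simp add: mod_add_right_eq)
      also have "\<dots> = z" using z by simp
      finally have ym: "y mod int n = z" .
      have "a \<le> y \<and> y < a + int n" unfolding y_def using assms by simp
      then have "y \<in> ?A" using ym z by simp
      then show "z \<in> (\<lambda>y. y mod int n) ` ?A" using ym by force
    qed
  qed
  show ?thesis unfolding Cnt_def using card_image[OF inj] img by simp
qed

lemma Cnt_mult:
  assumes "n > 0"
  shows "Cnt n R a (k * n) = k * card ({0..<int n} - R)"
proof (induction k arbitrary: a)
  case 0
  have e: "{y. a \<le> y \<and> y < a \<and> y mod int n \<notin> R} = {}" by auto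
  show ?case by (simp add: Cnt_def e)
next
  case (Suc k)
  have "Cnt n R a (Suc k * n) = Cnt n R a (n + k * n)" by simp
  also have "\<dots> = Cnt n R a n + Cnt n R (a + int n) (k * n)" by (rule Cnt_add)
  also have "\<dots> = Suc k * card ({0..<int n} - R)" using Suc Cnt_period[OF assms] by simp
  finally show ?case .
qed


definition Rset :: "nat \<Rightarrow> (int \<Rightarrow> int) \<Rightarrow> int \<Rightarrow> int set" where
 "Rset n w i = (\<lambda>j. (w j - w i) mod int n) ` {i+1..int n}"

lemma gap_Cnt:
  fixes w :: "int \<Rightarrow> int"
  assumes mono: "\<forall>i. 1 \<le> i \<and> i < int n \<longrightarrow> w i < w (i + 1)" and i: "1 \<le> i" "i < int n"
  shows "gapcount n w i = Cnt n (Rset n w i) 1 (nat (w (i+1) - w i - 1))"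
proof -
  let ?d = "w (i+1) - w i"
  let ?R = "Rset n w i"
  have dpos: "?d \<ge> 1" using mono i by auto
  have npos: "n > 0" using i by simp
  have beadiff: "bead n w x \<longleftrightarrow> (x - w i) mod int n \<in> ?R" if x: "w i < x" "x < w (i+1)" for x
  proof
    assume "bead n w x"
    then obtain j m where jm: "1 \<le> j" "j \<le> int n" "0 \<le> m" "x = w j - m * int n"
      unfolding bead_def by blast
    have "\<not> j \<le> i"
    proof
      assume "j \<le> i"
      then have "w j \<le> w i" using window_mono[OF mono] jm i by simp
      moreover have "m * int n \<ge> 0" using jm by simp
      ultimately show False using x jm by linarith
    qed
    then have jr: "j \<in> {i+1..int n}" using jm by simp
    have eqn: "x - w i = (w j - w i) + (-m) * int n" by (simp add: jm(4))
    have "(x - w i) mod int n = (w j - w i) mod int n" unfolding eqn by (rule mod_mult_self1)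
    then show "(x - w i) mod int n \<in> ?R" unfolding Rset_def using jr by blast
  next
    assume "(x - w i) mod int n \<in> ?R"
    then obtain j where jr: "j \<in> {i+1..int n}" and e: "(x - w i) mod int n = (w j - w i) mod int n"
      unfolding Rset_def by blast
    have "int n dvd (x - w i) - (w j - w i)" using e by (metis mod_eq_dvd_iff)
    then have dv: "int n dvd (w j - x)" by (metis dvd_minus_iff minus_diff_eq diff_diff_cancel diff_diff_eq2 add.commute diff_add_cancel)
    have "w (i+1) \<le> w j" using window_mono[OF mono, of "i+1" j] jr i by simp
    then have pos: "w j - x > 0" using x by simp
    define m where "m = (w j - x) div int n"
    have mn: "w j - x = m * int n" unfolding m_def using dv by simp
    have "m \<ge> 0" unfolding m_def using pos npos by (simp add: pos_imp_zdiv_nonneg_iff)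
    moreover have "x = w j - m * int n" using mn by simp
    ultimately have "1 \<le> j \<and> j \<le> int n \<and> 0 \<le> m \<and> x = w j - m * int n" using jr i by simp
    then show "bead n w x" unfolding bead_def by blast
  qed
  let ?G = "{x. w i < x \<and> x < w (i + 1) \<and> \<not> bead n w x}"
  let ?S = "{y. 1 \<le> y \<and> y < 1 + int (nat (?d - 1)) \<and> y mod int n \<notin> ?R}"
  have eq: "?S = (\<lambda>x. x - w i) ` ?G"
  proof (rule set_eqI, rule iffI)
    fix y assume y: "y \<in> ?S"
    then have "y + w i \<in> ?G" using beadiff[of "y + w i"] dpos by auto
    then show "y \<in> (\<lambda>x. x - w i) ` ?G" by (rule image_eqI[rotated]) simp
  next
    fix y assume "y \<in> (\<lambda>x. x - w i) ` ?G"
    then obtain x where x: "x \<in> ?G" "y = x - w i" by blast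
    then show "y \<in> ?S" using beadiff[of x] dpos by auto
  qed
  have inj: "inj_on (\<lambda>x. x - w i) ?G" by (auto simp: inj_on_def)
  show ?thesis unfolding gapcount_def Cnt_def eq card_image[OF inj] by simp
qed


lemma decomp:
  fixes f :: "int \<Rightarrow> int"
  assumes "\<forall>x. f (x + int n) = f x + int n"
  shows "f x = f ((x-1) mod int n + 1) + ((x-1) div int n) * int n"
proof -
  have "x = ((x-1) mod int n + 1) + ((x-1) div int n) * int n"
    using mod_div_mult_eq[of "x-1" "int n"] by simp
  then have "f x = f (((x-1) mod int n + 1) + ((x-1) div int n) * int n)" by simp
  also have "\<dots> = f ((x-1) mod int n + 1) + ((x-1) div int n) * int n" using per_int assms by blast
  finally show ?thesis .
qed

fun Dn :: "nat \<Rightarrow> (int \<Rightarrow> int) \<Rightarrow> nat \<Rightarrow> int" where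
  "Dn n w 0 = 0"
| "Dn n w (Suc m) = Dn n w m + (w (int m + 2) - w (int m + 1)) mod int n"

lemma Dn_mod: "Dn n w m mod int n = (w (int m + 1) - w 1) mod int n"
proof (induction m)
  case 0 then show ?case by simp
next
  case (Suc m)
  let ?X = "w (int m + 2) - w (int m + 1)"
  have "Dn n w (Suc m) mod int n = (Dn n w m + ?X mod int n) mod int n" by simp
  also have "\<dots> = (Dn n w m mod int n + ?X mod int n) mod int n" by (simp add: mod_add_left_eq)
  also have "\<dots> = ((w (int m + 1) - w 1) mod int n + ?X mod int n) mod int n" using Suc by simp
  also have "\<dots> = ((w (int m + 1) - w 1) + ?X) mod int n" by (simp add: mod_add_eq)
  also have "\<dots> = (w (int (Suc m) + 1) - w 1) mod int n" by (simp add: add.commute)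
  finally show ?case .
qed

definition Pb :: "nat \<Rightarrow> (int \<Rightarrow> int) \<Rightarrow> (int \<Rightarrow> int) \<Rightarrow> bool" where
  "Pb n w b \<longleftrightarrow> b \<in> BIAS n \<and> (\<forall>i. 1 \<le> i \<and> i < int n \<longrightarrow>
      (b (i + 1) - b i) mod int n = (w (i + 1) - w i) mod int n)"

lemma Scirc_props:
  assumes "w \<in> Scirc n"
  shows "bij w" "\<forall>x. w (x + int n) = w x + int n" "(\<Sum>k = 1..int n. w k) = int ((n + 1) choose 2)"
    "\<forall>i. 1 \<le> i \<and> i < int n \<longrightarrow> w i < w (i + 1)"
  using assms unfolding Scirc_def affine_perm_def by auto

lemma dmod_nz:
  assumes "n \<ge> 2" "w \<in> Scirc n"
  shows "(w (k+1) - w k) mod int n \<noteq> 0"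
proof
  assume "(w (k+1) - w k) mod int n = 0"
  then have "int n dvd (w (k+1) - w k)" by auto
  then have "w k mod int n = w (k+1) mod int n" by (metis mod_eq_dvd_iff dvd_minus_iff minus_diff_eq)
  then obtain q where q: "k + 1 = k + q * int n" using res_lemma Scirc_props[OF assms(2)] bij_is_inj by metis
  then have "int n dvd 1" by (metis add_left_cancel dvd_triv_right)
  then have "int n \<le> 1" using zdvd_imp_le by auto
  then show False using assms(1) by simp
qed

lemma bias_exists:
  assumes n2: "n \<ge> 2" and w: "w \<in> Scirc n"
  shows "\<exists>b. Pb n w b"
proof -
  note wp = Scirc_props[OF w]
  have npos: "int n > 0" using n2 by simp
  define S where "S = (\<Sum>k\<in>{1..int n}. Dn n w (nat (k-1)))"
  define T where "T = int ((n+1) choose 2)"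
  define e where "e = (T - S) div int n"
  define b where "b = (\<lambda>x. e + Dn n w (nat ((x-1) mod int n)) + int n * ((x-1) div int n))"
  have bper: "\<forall>x. b (x + int n) = b x + int n"
  proof
    fix x
    have e1: "x + int n - 1 = (x - 1) + 1 * int n" by simp
    have m1: "(x + int n - 1) mod int n = (x - 1) mod int n" unfolding e1 by (rule mod_mult_self1)
    have "((x - 1) + 1 * int n) div int n = 1 + (x - 1) div int n"
      by (rule div_mult_self1) (use npos in simp)
    then have "(x + int n - 1) div int n = (x - 1) div int n + 1" unfolding e1 by simp
    with m1 show "b (x + int n) = b x + int n" unfolding b_def by (simp add: algebra_simps)
  qed
  have bwin: "b k = e + Dn n w (nat (k-1))" if "1 \<le> k" "k \<le> int n" for k
  proof -
    have "(k-1) mod int n = k - 1" using that by simp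
    moreover have "(k-1) div int n = 0" using that by simp
    ultimately show ?thesis unfolding b_def by simp
  qed
  have dmod: "(w (k+1) - w k) mod int n \<in> {1..int n - 1}" for k
  proof -
    have "(w (k+1) - w k) mod int n \<noteq> 0" using dmod_nz[OF n2 w] .
    moreover have "(w (k+1) - w k) mod int n \<ge> 0" "(w (k+1) - w k) mod int n < int n" using npos by auto
    ultimately show ?thesis by simp
  qed
  have bdiff: "b (k+1) - b k = (w (k+1) - w k) mod int n" if "1 \<le> k" "k < int n" for k
  proof -
    define m where "m = nat (k - 1)"
    have km: "k = int m + 1" using that m_def by simp
    have "nat (k + 1 - 1) = Suc m" using km by simp
    then have "b (k+1) = e + Dn n w (Suc m)" using bwin[of "k+1"] that by simp
    moreover have "b k = e + Dn n w m" using bwin[of k] that m_def by simp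
    ultimately show ?thesis using km by (simp add: add.commute)
  qed
  have bmodw: "b k mod int n = (w k + (e - w 1)) mod int n" if "1 \<le> k" "k \<le> int n" for k
  proof -
    have "b k mod int n = (e + Dn n w (nat (k-1)) mod int n) mod int n" using bwin[OF that] by (simp add: mod_add_right_eq)
    also have "\<dots> = (e + (w k - w 1) mod int n) mod int n" using Dn_mod[of n w "nat (k-1)"] that by simp
    also have "\<dots> = (w k + (e - w 1)) mod int n" by (simp add: mod_add_right_eq algebra_simps)
    finally show ?thesis .
  qed
  have bmod: "\<forall>x. b x mod int n = (w x + (e - w 1)) mod int n"
  proof
    fix x
    let ?r = "(x-1) mod int n + 1" and ?q = "(x-1) div int n"
    have r1: "(x-1) mod int n < int n" "0 \<le> (x-1) mod int n" using npos by auto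
    have r: "1 \<le> ?r" "?r \<le> int n" using r1 by linarith+
    have "b x mod int n = (b ?r + ?q * int n) mod int n" using decomp[OF bper] by metis
    also have "\<dots> = b ?r mod int n" by simp
    also have "\<dots> = (w ?r + (e - w 1)) mod int n" using bmodw[OF r] .
    also have "\<dots> = ((w ?r + (e - w 1)) + ?q * int n) mod int n" by simp
    also have "\<dots> = (w x + (e - w 1)) mod int n" using decomp[OF wp(2), of x] by (simp add: algebra_simps)
    finally show "b x mod int n = (w x + (e - w 1)) mod int n" .
  qed
  have bijb: "bij b" using bij_shift[OF wp(1) wp(2) bper bmod] n2 by simp
  have Smod: "S mod int n = T mod int n"
  proof -
    have "S mod int n = (\<Sum>k\<in>{1..int n}. Dn n w (nat (k-1)) mod int n) mod int n"
      unfolding S_def by (simp add: mod_sum_eq)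
    also have "\<dots> = (\<Sum>k\<in>{1..int n}. (w k - w 1) mod int n) mod int n"
      by (rule arg_cong[where f="\<lambda>s. s mod int n"], rule sum.cong) (auto simp: Dn_mod)
    also have "\<dots> = (\<Sum>k\<in>{1..int n}. (w k - w 1)) mod int n" by (simp add: mod_sum_eq)
    also have "(\<Sum>k\<in>{1..int n}. (w k - w 1)) = T - int n * w 1"
      using wp(3) unfolding T_def by (simp add: sum_subtractf)
    finally have "S mod int n = (T - int n * w 1) mod int n" .
    moreover have eqT: "T - int n * w 1 = T + (- w 1) * int n" by simp
    moreover have "(T + (- w 1) * int n) mod int n = T mod int n" by (rule mod_mult_self1)
    ultimately show ?thesis by simp
  qed
  have "int n dvd T - S" using Smod by (metis mod_eq_dvd_iff)
  then have ne: "int n * e = T - S" unfolding e_def by simp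
  have bsum: "(\<Sum>k = 1..int n. b k) = int ((n + 1) choose 2)"
  proof -
    have "(\<Sum>k = 1..int n. b k) = (\<Sum>k = 1..int n. e + Dn n w (nat (k-1)))"
      by (rule sum.cong) (auto simp: bwin)
    also have "\<dots> = int n * e + S" unfolding S_def by (simp add: sum.distrib)
    also have "\<dots> = T" using ne by simp
    finally show ?thesis unfolding T_def .
  qed
  have binc: "\<forall>i. 1 \<le> i \<and> i < int n \<longrightarrow> b i < b (i + 1)"
  proof (intro allI impI)
    fix i assume "1 \<le> i \<and> i < int n"
    then have "b (i+1) - b i \<in> {1..int n - 1}" using bdiff dmod by simp
    then show "b i < b (i + 1)" by simp
  qed
  have "b \<in> Scirc n" unfolding Scirc_def affine_perm_def using bijb bper bsum binc by blast
  moreover have "\<forall>i. 1 \<le> i \<and> i < int n \<longrightarrow> b (i + 1) - b i \<in> {1 .. int n - 1}"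
    using bdiff dmod by simp
  ultimately have "b \<in> BIAS n" unfolding BIAS_def by blast
  moreover have "\<forall>i. 1 \<le> i \<and> i < int n \<longrightarrow>
      (b (i + 1) - b i) mod int n = (w (i + 1) - w i) mod int n" using bdiff by simp
  ultimately show ?thesis unfolding Pb_def by blast
qed


lemma bias_unique:
  assumes n2: "n \<ge> 2" and P1: "Pb n w b" and P2: "Pb n w b'"
  shows "b' = b"
proof -
  have npos: "int n > 0" using n2 by simp
  have bS: "b \<in> Scirc n" "b' \<in> Scirc n" using P1 P2 unfolding Pb_def BIAS_def by auto
  note bp = Scirc_props[OF bS(1)] and b'p = Scirc_props[OF bS(2)]
  have dif: "b' (k+1) - b' k = b (k+1) - b k" if "1 \<le> k" "k < int n" for k
  proof -
    have "(b' (k+1) - b' k) mod int n = (b (k+1) - b k) mod int n" using P1 P2 that unfolding Pb_def by simp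
    moreover have "b' (k+1) - b' k \<in> {1..int n - 1}" "b (k+1) - b k \<in> {1..int n - 1}"
      using P1 P2 that unfolding Pb_def BIAS_def by auto
    moreover have "x \<in> {1..int n - 1} \<Longrightarrow> x mod int n = x" for x by simp
    ultimately show ?thesis by metis
  qed
  have win: "1 + int m \<le> int n \<longrightarrow> b' (1 + int m) - b (1 + int m) = b' 1 - b 1" for m
  proof (induction m)
    case 0 then show ?case by simp
  next
    case (Suc m)
    show ?case
    proof
      assume h: "1 + int (Suc m) \<le> int n"
      have e: "1 + int (Suc m) = (1 + int m) + 1" by simp
      have "b' ((1 + int m) + 1) - b' (1 + int m) = b ((1 + int m) + 1) - b (1 + int m)"
        using dif[of "1 + int m"] h by simp
      then show "b' (1 + int (Suc m)) - b (1 + int (Suc m)) = b' 1 - b 1" using Suc h unfolding e by simp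
    qed
  qed
  define c where "c = b' 1 - b 1"
  have winc: "b' k = b k + c" if "1 \<le> k" "k \<le> int n" for k
    using win[of "nat (k - 1)"] that unfolding c_def by simp
  have "(\<Sum>k = 1..int n. b' k) = (\<Sum>k = 1..int n. b k + c)" by (rule sum.cong) (auto simp: winc)
  also have "\<dots> = (\<Sum>k = 1..int n. b k) + int n * c" by (simp add: sum.distrib)
  finally have "int n * c = 0" using bp(3) b'p(3) by simp
  then have c0: "c = 0" using npos by simp
  show ?thesis
  proof
    fix x
    let ?r = "(x-1) mod int n + 1" and ?q = "(x-1) div int n"
    have r1: "(x-1) mod int n < int n" "0 \<le> (x-1) mod int n" using npos by auto
    have r: "1 \<le> ?r" "?r \<le> int n" using r1 by linarith+
    have "b' x = b' ?r + ?q * int n" using decomp[OF b'p(2)] by metis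
    also have "\<dots> = b ?r + ?q * int n" using winc[OF r] c0 by simp
    also have "\<dots> = b x" using decomp[OF bp(2), of x] by simp
    finally show "b' x = b x" .
  qed
qed

lemma Rset_card:
  assumes n2: "n \<ge> 2" and w: "w \<in> Scirc n" and i: "1 \<le> i" "i \<le> int n - 1"
  shows "card ({0..<int n} - Rset n w i) = nat i"
proof -
  have npos: "int n > 0" using n2 by simp
  note wp = Scirc_props[OF w]
  have inj: "inj_on (\<lambda>j. (w j - w i) mod int n) {i+1..int n}"
  proof (rule inj_onI)
    fix j j' assume j: "j \<in> {i+1..int n}" and j': "j' \<in> {i+1..int n}"
      and e: "(w j - w i) mod int n = (w j' - w i) mod int n"
    have "int n dvd (w j - w i) - (w j' - w i)" using e by (metis mod_eq_dvd_iff)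
    then have "int n dvd w j - w j'" by simp
    then have "w j mod int n = w j' mod int n" by (metis mod_eq_dvd_iff)
    then obtain q where q: "j' = j + q * int n" using res_lemma wp(1,2) bij_is_inj by metis
    have "q = 0"
    proof (rule ccontr)
      assume "q \<noteq> 0"
      then have qq: "q \<ge> 1 \<or> q \<le> -1" by linarith
      have A: "q * int n \<ge> int n" if "q \<ge> 1" using mult_right_mono[of 1 q "int n"] that by simp
      have B: "q * int n \<le> - int n" if "q \<le> -1" using mult_right_mono[of q "-1" "int n"] that by simp
      have jj: "i+1 \<le> j" "j \<le> int n" "i+1 \<le> j'" "j' \<le> int n" using j j' by auto
      from qq show False
      proof
        assume "q \<ge> 1" then show False using A jj q i by linarith
      next
        assume "q \<le> -1" then show False using B jj q i by linarith
      qed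
    qed
    then show "j = j'" using q by simp
  qed
  have sub: "Rset n w i \<subseteq> {0..<int n}" unfolding Rset_def using npos by auto
  have cR: "card (Rset n w i) = nat (int n - i)" unfolding Rset_def using card_image[OF inj] by simp
  have "card ({0..<int n} - Rset n w i) = card {0..<int n} - card (Rset n w i)"
    using sub by (simp add: card_Diff_subset finite_subset)
  also have "\<dots> = nat i" using cR i by simp
  finally show ?thesis .
qed


lemma Rset_eq:
  assumes "\<forall>k. 1 \<le> k \<and> k < int n \<longrightarrow> (b (k + 1) - b k) mod int n = (w (k + 1) - w k) mod int n"
    and i: "1 \<le> i"
  shows "Rset n b i = Rset n w i"
proof -
  have st: "i + int m \<le> int n \<longrightarrow> (b (i + int m) - b i) mod int n = (w (i + int m) - w i) mod int n" for m
  proof (induction m)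
    case 0 then show ?case by simp
  next
    case (Suc m)
    show ?case
    proof
      assume h: "i + int (Suc m) \<le> int n"
      have e: "i + int (Suc m) = (i + int m) + 1" by simp
      have IH: "(b (i + int m) - b i) mod int n = (w (i + int m) - w i) mod int n" using Suc h by simp
      have D: "(b (i + int m + 1) - b (i + int m)) mod int n = (w (i + int m + 1) - w (i + int m)) mod int n"
        using assms(1) h i by simp
      have "(b (i + int m + 1) - b i) mod int n
          = ((b (i + int m + 1) - b (i + int m)) mod int n + (b (i + int m) - b i) mod int n) mod int n"
        by (simp add: mod_add_eq)
      also have "\<dots> = ((w (i + int m + 1) - w (i + int m)) mod int n + (w (i + int m) - w i) mod int n) mod int n"
        using IH D by simp
      also have "\<dots> = (w (i + int m + 1) - w i) mod int n" by (simp add: mod_add_eq)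
      finally show "(b (i + int (Suc m)) - b i) mod int n = (w (i + int (Suc m)) - w i) mod int n"
        unfolding e .
    qed
  qed
  have "(b j - b i) mod int n = (w j - w i) mod int n" if "j \<in> {i+1..int n}" for j
    using st[of "nat (j - i)"] that by simp
  then show ?thesis unfolding Rset_def by (rule image_cong[OF refl])
qed

theorem mainTheorem6:
  fixes n :: nat and w :: "int \<Rightarrow> int" and i :: int
  assumes "n \<ge> 2" and "w \<in> Scirc n" and "1 \<le> i" and "i \<le> int n - 1"
  shows "int (t_coord n w i) =
    int (card {r::int. i + 1 \<le> r * int n \<and> r * int n < i + int (jmax n w i) * int n})"
proof -
  note n2 = assms(1) and w = assms(2) and i1 = assms(3) and i2 = assms(4)
  have npos: "int n > 0" using n2 by simp
  note wp = Scirc_props[OF w]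
  have ex1: "\<exists>!b. Pb n w b" using bias_exists[OF n2 w] bias_unique[OF n2] by metis
  have "bias_of n w = (THE b. Pb n w b)" unfolding bias_of_def Pb_def by simp
  then have Pbw: "Pb n w (bias_of n w)" using theI'[OF ex1] by simp
  define b where "b = bias_of n w"
  have bS: "b \<in> Scirc n" using Pbw unfolding b_def Pb_def BIAS_def by auto
  have bd: "b (i+1) - b i \<in> {1..int n - 1}" using Pbw i1 i2 unfolding b_def Pb_def BIAS_def by auto
  have bm: "(b (i+1) - b i) mod int n = (w (i+1) - w i) mod int n" using Pbw i1 i2 unfolding b_def Pb_def by auto
  note bp = Scirc_props[OF bS]
  define R where "R = Rset n w i"
  have Req: "Rset n b i = R" unfolding R_def
    by (rule Rset_eq) (use Pbw i1 in \<open>auto simp: b_def Pb_def\<close>)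
  define d where "d = w (i+1) - w i"
  define db where "db = b (i+1) - b i"
  have dpos: "d \<ge> 1" using wp(4) i1 i2 unfolding d_def by auto
  have dbd: "db = d mod int n" using bd bm unfolding db_def d_def by simp
  define k where "k = nat (d div int n)"
  have kk: "int k = d div int n" unfolding k_def using dpos npos by (simp add: pos_imp_zdiv_nonneg_iff)
  have dk: "d = db + int k * int n" using dbd kk mod_div_mult_eq[of d "int n"] by simp
  have db1: "1 \<le> db" "db \<le> int n - 1" using bd unfolding db_def by auto
  have gw: "gapcount n w i = Cnt n R 1 (nat (d - 1))"
    unfolding R_def d_def using gap_Cnt[OF wp(4) i1] i2 by simp
  have gb: "gapcount n b i = Cnt n R 1 (nat (db - 1))"
    unfolding db_def using gap_Cnt[OF bp(4) i1] i2 Req by simp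
  have nd: "nat (d - 1) = nat (db - 1) + k * n"
  proof -
    have e: "d - 1 = (db - 1) + int (k * n)" using dk by simp
    have "db - 1 \<ge> 0" using db1 by simp
    then have "nat ((db - 1) + int (k * n)) = nat (db - 1) + nat (int (k * n))"
      by (rule nat_add_distrib) simp
    then show ?thesis unfolding e by (simp only: nat_int)
  qed
  have M: "card ({0..<int n} - R) = nat i" unfolding R_def using Rset_card[OF n2 w i1 i2] .
  have gg: "gapcount n w i = gapcount n b i + k * nat i"
    unfolding gw gb nd Cnt_add Cnt_mult[OF n2[THEN less_le_trans[OF zero_less_numeral]]]
    using M by simp
  have tc: "t_coord n w i = k"
    unfolding t_coord_def b_def[symmetric]
  proof (rule the_equality)
    show "int (gapcount n w i) = i * int k + int (gapcount n b i)" using gg i1 by simp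
  next
    fix t assume "int (gapcount n w i) = i * int t + int (gapcount n b i)"
    then have "i * int t = i * int k" using gg i1 by simp
    then show "t = k" using i1 by simp
  qed
  have wj: "w (i + int j * int n) = w i + int j * int n" for j using per_int wp(2) by metis
  have cond: "(w (i + 1) > w (i + int j * int n)) \<longleftrightarrow> int j * int n < d" for j
    using wj[of j] unfolding d_def by auto
  have jm: "jmax n w i = k"
  proof (cases "\<exists>j::nat. 1 \<le> j \<and> w (i + 1) > w (i + int j * int n)")
    case True
    then obtain j where j: "1 \<le> j" "int j * int n < d" using cond by blast
    have "int j * int n \<ge> 1 * int n" using j(1) mult_right_mono[of 1 "int j" "int n"] by simp
    then have k1: "k \<ge> 1"
    proof -
      assume "int j * int n \<ge> 1 * int n"
      show "k \<ge> 1"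
      proof (rule ccontr)
        assume "\<not> k \<ge> 1" then have "k = 0" by simp
        then show False using dk db1 j \<open>int j * int n \<ge> 1 * int n\<close> by simp
      qed
    qed
    have "(GREATEST j::nat. 1 \<le> j \<and> w (i + 1) > w (i + int j * int n)) = k"
    proof (rule Greatest_equality)
      show "1 \<le> k \<and> w (i + 1) > w (i + int k * int n)" using k1 cond dk db1 by simp
    next
      fix y assume "1 \<le> y \<and> w (i + 1) > w (i + int y * int n)"
      then have y: "int y * int n < d" using cond by blast
      show "y \<le> k"
      proof (rule ccontr)
        assume "\<not> y \<le> k" then have "int y \<ge> int k + 1" by simp
        then have "int y * int n \<ge> (int k + 1) * int n" using mult_right_mono npos by simp
        then show False using y dk db1 by (simp add: algebra_simps)
      qed
    qed
    then show ?thesis unfolding jmax_def using True by simp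
  next
    case False
    have "k = 0"
    proof (rule ccontr)
      assume "k \<noteq> 0"
      then have "1 \<le> k \<and> w (i + 1) > w (i + int k * int n)" using cond dk db1 by simp
      then show False using False by blast
    qed
    moreover have "jmax n w i = 0" unfolding jmax_def by (rule if_not_P[OF False])
    ultimately show ?thesis by simp
  qed
  have cs: "{r::int. i + 1 \<le> r * int n \<and> r * int n < i + int k * int n} = {1..int k}"
  proof (rule set_eqI, rule iffI)
    fix r assume "r \<in> {r::int. i + 1 \<le> r * int n \<and> r * int n < i + int k * int n}"
    then have r: "i + 1 \<le> r * int n" "r * int n < i + int k * int n" by auto
    have "1 \<le> r"
    proof (rule ccontr)
      assume "\<not> 1 \<le> r" then have "r \<le> 0" by simp
      then have "r * int n \<le> 0" using npos by (simp add: mult_nonpos_nonneg)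
      then show False using r i1 by simp
    qed
    moreover have "r \<le> int k"
    proof (rule ccontr)
      assume "\<not> r \<le> int k" then have "r \<ge> int k + 1" by simp
      then have "r * int n \<ge> (int k + 1) * int n" using mult_right_mono npos by simp
      then show False using r i2 by (simp add: algebra_simps)
    qed
    ultimately show "r \<in> {1..int k}" by simp
  next
    fix r assume "r \<in> {1..int k}"
    then have r: "1 \<le> r" "r \<le> int k" by auto
    have a: "int n \<le> r * int n" using mult_right_mono[of 1 r "int n"] r npos by simp
    have c: "r * int n \<le> int k * int n" using mult_right_mono[of r "int k" "int n"] r npos by simp
    have c1: "i + 1 \<le> r * int n" using a i2 by linarith
    have c2: "r * int n < i + int k * int n" using c i1 by linarith
    show "r \<in> {r::int. i + 1 \<le> r * int n \<and> r * int n < i + int k * int n}"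
      using c1 c2 by blast
  qed
  show ?thesis unfolding tc jm cs by simp
qed

end
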